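(* Let $w_1,\dots,w_l\in\mathbb{C}$, $z_1,\dots,z_l\in\mathbb{T}$ and $R>0$. There exists $b\in\mathbb{C}$ with $|b|\le 2lR$ such that $|w_m+bz_m|\ge R$ for all $m=1,\dots,l$.
   Context: $\mathbb{T}$ denotes the unit circle in $\mathbb{C}$. *)

theory Defs
  imports "HOL-Analysis.Analysis"
begin

end

theory Submission
  imports Defs
begin

theorem lemma4p14:
  fixes l :: nat and w z :: "nat \<Rightarrow> complex" and R :: real
  assumes "\<forall>m\<in>{1..l}. norm (z m) = 1"
    and "R > 0"
  shows "\<exists>b::complex. norm b \<le> 2 * real l * R \<and>
           (\<forall>m\<in>{1..l}. norm (w m + b * z m) \<ge> R)"
proof (rule ccontr)
  assume H: "\<not> ?thesis"
  define p where "p k = complex_of_real (2 * R * real k)" for k :: nat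
  have pn: "norm (p k) \<le> 2 * real l * R" if "k \<le> l" for k
  proof -
    have "norm (p k) = 2 * R * real k" using assms(2) by (simp only: p_def norm_of_real) simp
    also have "\<dots> \<le> 2 * R * real l" using that assms(2) by simp
    finally show ?thesis by (simp add: mult.commute mult.left_commute)
  qed
  have "\<forall>k\<in>{0..l}. \<exists>m\<in>{1..l}. norm (w m + p k * z m) < R"
    using H pn by (meson atLeastAtMost_iff not_le)
  then obtain f where f: "\<And>k. k \<in> {0..l} \<Longrightarrow> f k \<in> {1..l} \<and> norm (w (f k) + p k * z (f k)) < R"
    by metis
  have "\<not> inj_on f {0..l}"
  proof
    assume "inj_on f {0..l}"
    moreover have "f ` {0..l} \<subseteq> {1..l}" using f by blast
    ultimately have "card {0..l} \<le> card {1..l}" by (intro card_inj_on_le) auto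
    then show False by simp
  qed
  then obtain i j where ij: "i \<in> {0..l}" "j \<in> {0..l}" "i \<noteq> j" "f i = f j"
    unfolding inj_on_def by blast
  let ?m = "f i"
  have zm: "norm (z ?m) = 1" using f[OF ij(1)] assms(1) by blast
  have "norm (p i - p j) = norm ((w ?m + p i * z ?m) - (w ?m + p j * z ?m))"
  proof -
    have "(w ?m + p i * z ?m) - (w ?m + p j * z ?m) = (p i - p j) * z ?m" by (simp add: algebra_simps)
    then show ?thesis by (simp add: norm_mult zm)
  qed
  also have "\<dots> \<le> norm (w ?m + p i * z ?m) + norm (w ?m + p j * z ?m)" by (rule norm_triangle_ineq4)
  also have "\<dots> < 2 * R" using f[OF ij(1)] f[OF ij(2)] ij(4) by simp
  finally have lt: "norm (p i - p j) < 2 * R" .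
  have "norm (p i - p j) = 2 * R * \<bar>real i - real j\<bar>"
  proof -
    have "p i - p j = complex_of_real (2 * R * (real i - real j))"
      by (simp add: p_def right_diff_distrib)
    then show ?thesis using assms(2) by (simp only: norm_of_real) (simp add: abs_mult)
  qed
  moreover have "\<bar>real i - real j\<bar> \<ge> 1" using ij(3) by linarith
  ultimately have "norm (p i - p j) \<ge> 2 * R" using assms(2) by simp
  with lt show False by simp
qed

end
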